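(* Let $V$ be a toroidal vertex algebra. If $(W,Y_W)$ is a module for $V^0$ viewed as a toroidal vertex algebra, then $(W,Y_W^0)$ is a module for $V^0$ viewed as a vertex algebra, where $Y_W^0(u,x_0)=Y_W(u;x_0,\mathbf{x})|_{\mathbf{x}=1}$ for $u\in V^0$. Conversely, if $(W,Y_W^0)$ is a module for $V^0$ viewed as a vertex algebra, then $(W,Y_W)$ is a module for $V^0$ viewed as a toroidal vertex algebra, where $$Y_W(u;x_0,\mathbf{x})=\sum_{\mathbf{m}\in\mathbb{Z}^r}Y_W^0(u_{-1,\mathbf{m}}\mathbf{1},x_0)\mathbf{x}^{-\mathbf{m}}\quad\text{for }u\in V^0.$$ Furthermore, the category of modules for $V^0$ viewed as a toroidal vertex algebra is naturally isomorphic to the category of modules for $V^0$ viewed as a vertex algebra.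
   Context: Fix a positive integer $r$. Write $\mathbf{x}=(x_1,\dots,x_r)$, $\mathbf{x}^{\mathbf{m}}=x_1^{m_1}\cdots x_r^{m_r}$ (similarly for other variables), $\mathbf{z}\mathbf{y}=(z_1y_1,\dots,z_ry_r)$. For a vector space $W$ put $\mathcal{E}(W,r)=\mathrm{Hom}(W,W[[x_1^{\pm1},\dots,x_r^{\pm1}]]((x_0)))$ and $\mathcal{E}(W)=\mathrm{Hom}(W,W((x_0)))$. A toroidal vertex algebra is a vector space $V$ with a linear map $Y(\cdot;x_0,\mathbf{x}):V\to\mathcal{E}(V,r)$, $v\mapsto\sum_{(m_0,\mathbf{m})\in\mathbb{Z}\times\mathbb{Z}^r}v_{m_0,\mathbf{m}}x_0^{-m_0-1}\mathbf{x}^{-\mathbf{m}}$, and a vector $\mathbf{1}$ with $Y(\mathbf{1};x_0,\mathbf{x})v=v$, $Y(v;x_0,\mathbf{x})\mathbf{1}\in V[[x_0,x_1^{\pm1},\dots,x_r^{\pm1}]]$ for all $v$, and the Jacobi identity $$z_0^{-1}\delta\!\left(\tfrac{x_0-y_0}{z_0}\right)Y(u;x_0,\mathbf{z}\mathbf{y})Y(v;y_0,\mathbf{y})-z_0^{-1}\delta\!\left(\tfrac{y_0-x_0}{-z_0}\right)Y(v;y_0,\mathbf{y})Y(u;x_0,\mathbf{z}\mathbf{y})=y_0^{-1}\delta\!\left(\tfrac{x_0-z_0}{y_0}\right)Y(Y(u;z_0,\mathbf{z})v;y_0,\mathbf{y})$$ for all $u,v$, where $Y(u;x_0,\mathbf{z}\mathbf{y})=\sum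 u_{m_0,\mathbf{m}}x_0^{-m_0-1}\mathbf{z}^{-\mathbf{m}}\mathbf{y}^{-\mathbf{m}}$. Modules over a toroidal vertex algebra: vector space $W$, linear $Y_W:V\to\mathcal{E}(W,r)$ with $Y_W(\mathbf{1};x_0,\mathbf{x})=1_W$ and the Jacobi identity with $Y_W$ in the three outer operator places; module homomorphisms are linear maps intertwining all $Y_W$. $V^0=\mathrm{span}\{v_{m_0,\mathbf{m}}\mathbf{1}\mid v\in V,(m_0,\mathbf{m})\in\mathbb{Z}\times\mathbb{Z}^r\}$ is a toroidal vertex subalgebra of $V$; for any module $(W,Y_W)$ of the toroidal vertex algebra $V^0$ and $u\in V^0$ one has $Y_W(u;x_0,\mathbf{x})\in\mathcal{E}(W)[x_1^{\pm1},\dots,x_r^{\pm1}]$, so the specialization $\mathbf{x}=1$ is defined; with $Y^0(v,x_0)=Y(v;x_0,\mathbf{x})|_{\mathbf{x}=1}$, $(V^0,Y^0,\mathbf{1})$ is a vertex algebra ("$V^0$ viewed as a vertex algebra"). *)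

theory Defs
  imports "HOL-Analysis.Finite_Cartesian_Product"
begin

(* An element of E(W,r) = Hom(W, W[[x^{+-1}]]((x0))) attached to u is encoded by its
   components  Y u m0 m w  = coefficient of x0^{-m0-1} x^{-m} in Y(u;x0,x)w,
   with m0 :: int and m :: int^'r (so r = CARD('r) >= 1).
   Similarly for E(W) = Hom(W,W((x0))): Y u m0 w = coefficient of x0^{-m0-1}. *)

type_synonym ('v,'r,'w) tvo = "'v \<Rightarrow> int \<Rightarrow> int^'r \<Rightarrow> 'w \<Rightarrow> 'w"
type_synonym ('v,'w) vo = "'v \<Rightarrow> int \<Rightarrow> 'w \<Rightarrow> 'w"

(* sum of a finitely supported family indexed by nat (all such sums below are finite
   because of the truncation conditions) *)
definition fsum :: "(nat \<Rightarrow> 'w::comm_monoid_add) \<Rightarrow> 'w" where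
  "fsum f = sum f {i. f i \<noteq> 0}"

definition ibinom :: "int \<Rightarrow> nat \<Rightarrow> int" where
  "ibinom l i = (\<Prod>j<i. l - int j) div fact i"

definition isign :: "int \<Rightarrow> int" where
  "isign l = (if even l then 1 else -1)"

definition tlinear_on :: "('k::field \<Rightarrow> 'v \<Rightarrow> 'v::ab_group_add) \<Rightarrow> ('k \<Rightarrow> 'w \<Rightarrow> 'w::ab_group_add)
    \<Rightarrow> 'v set \<Rightarrow> ('v,'r::finite,'w) tvo \<Rightarrow> bool" where
  "tlinear_on sV sW S YW \<longleftrightarrow> (\<forall>a b u v m0 m w. u \<in> S \<longrightarrow> v \<in> S \<longrightarrow>
      YW (sV a u + sV b v) m0 m w = sW a (YW u m0 m w) + sW b (YW v m0 m w))"

definition vlinear_on :: "('k::field \<Rightarrow> 'v \<Rightarrow> 'v::ab_group_add) \<Rightarrow> ('k \<Rightarrow> 'w \<Rightarrow> 'w::ab_group_add)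
    \<Rightarrow> 'v set \<Rightarrow> ('v,'w) vo \<Rightarrow> bool" where
  "vlinear_on sV sW S YW \<longleftrightarrow> (\<forall>a b u v m0 w. u \<in> S \<longrightarrow> v \<in> S \<longrightarrow>
      YW (sV a u + sV b v) m0 w = sW a (YW u m0 w) + sW b (YW v m0 w))"

(* Toroidal Jacobi identity, written coefficientwise: the coefficient of
   z0^{-l-1} x0^{-m0-1} y0^{-n0-1} z^{-m} y^{-p} applied to w, for u,v in S. *)
definition toroidal_jacobi :: "('k::field \<Rightarrow> 'w \<Rightarrow> 'w::ab_group_add) \<Rightarrow> 'v set
    \<Rightarrow> ('v,'r::finite,'v) tvo \<Rightarrow> ('v,'r,'w) tvo \<Rightarrow> bool" where
  "toroidal_jacobi sW S Y YW \<longleftrightarrow> (\<forall>u\<in>S. \<forall>v\<in>S. \<forall>w l m0 n0 m p.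
     fsum (\<lambda>i. sW (of_int (ibinom m0 i)) (YW (Y u (l + int i) m v) (m0 + n0 - int i) p w))
   = fsum (\<lambda>i. sW (of_int ((-1)^i * (ibinom l i)))
        (YW u (m0 + l - int i) m (YW v (n0 + int i) (p - m) w)
         - sW (of_int (isign l)) (YW v (n0 + l - int i) (p - m) (YW u (m0 + int i) m w)))))"

definition va_jacobi :: "('k::field \<Rightarrow> 'w \<Rightarrow> 'w::ab_group_add) \<Rightarrow> 'v set
    \<Rightarrow> ('v,'v) vo \<Rightarrow> ('v,'w) vo \<Rightarrow> bool" where
  "va_jacobi sW S Y YW \<longleftrightarrow> (\<forall>u\<in>S. \<forall>v\<in>S. \<forall>w l m0 n0.
     fsum (\<lambda>i. sW (of_int (ibinom m0 i)) (YW (Y u (l + int i) v) (m0 + n0 - int i) w))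
   = fsum (\<lambda>i. sW (of_int ((-1)^i * (ibinom l i)))
        (YW u (m0 + l - int i) (YW v (n0 + int i) w)
         - sW (of_int (isign l)) (YW v (n0 + l - int i) (YW u (m0 + int i) w)))))"

definition toroidal_vertex_algebra :: "('k::field \<Rightarrow> 'v \<Rightarrow> 'v::ab_group_add)
    \<Rightarrow> ('v,'r::finite,'v) tvo \<Rightarrow> 'v \<Rightarrow> bool" where
  "toroidal_vertex_algebra sV Y one \<longleftrightarrow>
     vector_space sV
   \<and> tlinear_on sV sV UNIV Y
   \<and> (\<forall>u m0 m. Vector_Spaces.linear sV sV (Y u m0 m))
   \<and> (\<forall>u w. \<exists>N. \<forall>k\<ge>N. \<forall>m. Y u k m w = 0)
   \<and> (\<forall>k m w. Y one k m w = (if k = -1 \<and> m = 0 then w else 0))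
   \<and> (\<forall>v k m. k \<ge> 0 \<longrightarrow> Y v k m one = 0)
   \<and> toroidal_jacobi sV UNIV Y Y"

definition V0 :: "('k::field \<Rightarrow> 'v \<Rightarrow> 'v::ab_group_add) \<Rightarrow> ('v,'r::finite,'v) tvo \<Rightarrow> 'v \<Rightarrow> 'v set" where
  "V0 sV Y one = module.span sV {Y v k m one | v k m. True}"

definition toroidal_module_on :: "('k::field \<Rightarrow> 'v \<Rightarrow> 'v::ab_group_add) \<Rightarrow> ('v,'r::finite,'v) tvo
    \<Rightarrow> 'v \<Rightarrow> 'v set \<Rightarrow> ('k \<Rightarrow> 'w \<Rightarrow> 'w::ab_group_add) \<Rightarrow> ('v,'r,'w) tvo \<Rightarrow> bool" where
  "toroidal_module_on sV Y one S sW YW \<longleftrightarrow>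
     vector_space sW
   \<and> tlinear_on sV sW S YW
   \<and> (\<forall>u\<in>S. \<forall>m0 m. Vector_Spaces.linear sW sW (YW u m0 m))
   \<and> (\<forall>u\<in>S. \<forall>w. \<exists>N. \<forall>k\<ge>N. \<forall>m. YW u k m w = 0)
   \<and> (\<forall>k m w. YW one k m w = (if k = -1 \<and> m = 0 then w else 0))
   \<and> toroidal_jacobi sW S Y YW"

definition va_module_on :: "('k::field \<Rightarrow> 'v \<Rightarrow> 'v::ab_group_add) \<Rightarrow> ('v,'v) vo
    \<Rightarrow> 'v \<Rightarrow> 'v set \<Rightarrow> ('k \<Rightarrow> 'w \<Rightarrow> 'w::ab_group_add) \<Rightarrow> ('v,'w) vo \<Rightarrow> bool" where
  "va_module_on sV Y one S sW YW \<longleftrightarrow>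
     vector_space sW
   \<and> vlinear_on sV sW S YW
   \<and> (\<forall>u\<in>S. \<forall>m0. Vector_Spaces.linear sW sW (YW u m0))
   \<and> (\<forall>u\<in>S. \<forall>w. \<exists>N. \<forall>k\<ge>N. YW u k w = 0)
   \<and> (\<forall>k w. YW one k w = (if k = -1 then w else 0))
   \<and> va_jacobi sW S Y YW"

(* specialization x = 1:  coefficient of x0^{-m0-1} in Y(u;x0,x)|_{x=1} w
   (the sum over m is finite in the situations considered) *)
definition spec :: "('v,'r::finite,'w::comm_monoid_add) tvo \<Rightarrow> ('v,'w) vo" where
  "spec Y u m0 w = (\<Sum>m\<in>{m. Y u m0 m w \<noteq> 0}. Y u m0 m w)"

(* Y_W(u;x0,x) = sum_m Y_W^0(u_{-1,m} 1, x0) x^{-m} *)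
definition unspec :: "('v,'r::finite,'v) tvo \<Rightarrow> 'v \<Rightarrow> ('v,'w) vo \<Rightarrow> ('v,'r,'w) tvo" where
  "unspec Y one YW0 u m0 m w = YW0 (Y u (-1) m one) m0 w"

definition toroidal_hom :: "('k::field \<Rightarrow> 'w1 \<Rightarrow> 'w1::ab_group_add) \<Rightarrow> ('k \<Rightarrow> 'w2 \<Rightarrow> 'w2::ab_group_add)
    \<Rightarrow> 'v set \<Rightarrow> ('v,'r::finite,'w1) tvo \<Rightarrow> ('v,'r,'w2) tvo \<Rightarrow> ('w1 \<Rightarrow> 'w2) \<Rightarrow> bool" where
  "toroidal_hom sW1 sW2 S YW1 YW2 f \<longleftrightarrow> Vector_Spaces.linear sW1 sW2 f
     \<and> (\<forall>u\<in>S. \<forall>m0 m w. f (YW1 u m0 m w) = YW2 u m0 m (f w))"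

definition va_hom :: "('k::field \<Rightarrow> 'w1 \<Rightarrow> 'w1::ab_group_add) \<Rightarrow> ('k \<Rightarrow> 'w2 \<Rightarrow> 'w2::ab_group_add)
    \<Rightarrow> 'v set \<Rightarrow> ('v,'w1) vo \<Rightarrow> ('v,'w2) vo \<Rightarrow> ('w1 \<Rightarrow> 'w2) \<Rightarrow> bool" where
  "va_hom sW1 sW2 S YW1 YW2 f \<longleftrightarrow> Vector_Spaces.linear sW1 sW2 f
     \<and> (\<forall>u\<in>S. \<forall>m0 w. f (YW1 u m0 w) = YW2 u m0 (f w))"

end

theory Submission
  imports Defs
begin


lemma lin_zero: "Vector_Spaces.linear s1 s2 f \<Longrightarrow> f 0 = 0"
  by (simp add: linear_iff_module_hom module_hom.zero)
lemma lin_add: "Vector_Spaces.linear s1 s2 f \<Longrightarrow> f (x + y) = f x + f y"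
  by (simp add: linear_iff_module_hom module_hom.add)
lemma lin_scale: "Vector_Spaces.linear s1 s2 f \<Longrightarrow> f (s1 c x) = s2 c (f x)"
  by (simp add: linear_iff_module_hom module_hom.scale)
lemma lin_diff: "Vector_Spaces.linear s1 s2 f \<Longrightarrow> f (x - y) = f x - f y"
  by (simp add: linear_iff_module_hom module_hom.diff)
lemma lin_sum: "Vector_Spaces.linear s1 s2 f \<Longrightarrow> f (sum g A) = (\<Sum>a\<in>A. f (g a))"
  by (simp add: linear_iff_module_hom module_hom.sum)

lemma fsum_single: "(\<And>i. i \<noteq> i0 \<Longrightarrow> f i = 0) \<Longrightarrow> fsum f = f i0"
proof -
  assume h: "\<And>i. i \<noteq> i0 \<Longrightarrow> f i = 0"
  have "{i. f i \<noteq> 0} \<subseteq> {i0}" using h by auto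
  hence "sum f {i. f i \<noteq> 0} = sum f {i0}"
    by (intro sum.mono_neutral_left) auto
  thus ?thesis by (simp add: fsum_def)
qed

lemma fsum_zero: "(\<And>i. f i = 0) \<Longrightarrow> fsum f = 0"
  by (simp add: fsum_def)

lemma fsum_lessThan: "(\<And>i. i \<ge> N \<Longrightarrow> f i = 0) \<Longrightarrow> fsum f = sum f {..<N}"
proof -
  assume h: "\<And>i. i \<ge> N \<Longrightarrow> f i = 0"
  have "{i. f i \<noteq> 0} \<subseteq> {..<N}" using h by (auto simp: not_less[symmetric])
  hence "sum f {i. f i \<noteq> 0} = sum f {..<N}"
    by (intro sum.mono_neutral_left) auto
  thus ?thesis by (simp add: fsum_def)
qed

lemma ibinom_0_0[simp]: "ibinom l 0 = 1" by (simp add: ibinom_def)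
lemma ibinom_0_Suc[simp]: "ibinom 0 (Suc i) = 0"
proof -
  have "(\<Prod>j<Suc i. (0::int) - int j) = 0"
    by (rule prod_zero) auto
  thus ?thesis unfolding ibinom_def by (simp only:) simp
qed
lemma ibinom_0: "i \<noteq> 0 \<Longrightarrow> ibinom 0 i = 0"
  by (cases i) auto
lemma ibinom_m1: "ibinom (-1) i = (-1)^i"
proof -
  have "(\<Prod>j<i. (-1::int) - int j) = (-1)^i * fact i"
    by (induction i) (auto simp: algebra_simps)
  thus ?thesis by (simp add: ibinom_def)
qed
lemma isign_m1[simp]: "isign (-1) = -1" by (simp add: isign_def)




lemma G:
  fixes sW :: "'k::field \<Rightarrow> 'w \<Rightarrow> 'w::ab_group_add" and Y :: "('v,'r::finite,'v) tvo"
    and YW :: "('v,'r,'w) tvo"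
  assumes vs: "vector_space sW"
    and lin: "\<forall>u\<in>S. \<forall>k m. Vector_Spaces.linear sW sW (YW u k m)"
    and vac: "\<forall>k m w. YW one k m w = (if k = -1 \<and> m = 0 then w else 0)"
    and jac: "toroidal_jacobi sW S Y YW"
    and one: "one \<in> S" and u: "u \<in> S"
  shows G_a: "p \<noteq> m \<Longrightarrow> YW (Y u l m one) k p w = 0"
    and G_b: "YW (Y u (-1) m one) k m w = YW u k m w"
proof -
  interpret W: vector_space sW by (rule vs)
  have lz: "\<And>k m. YW u k m 0 = 0" using lin u lin_zero by blast
  have J: "\<And>w l MM NN m p. fsum (\<lambda>i. sW (of_int (ibinom MM i)) (YW (Y u (l + int i) m one) (MM + NN - int i) p w))
   = fsum (\<lambda>i. sW (of_int ((-1)^i * (ibinom l i)))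
        (YW u (MM + l - int i) m (YW one (NN + int i) (p - m) w)
         - sW (of_int (isign l)) (YW one (NN + l - int i) (p - m) (YW u (MM + int i) m w))))"
    using jac one u unfolding toroidal_jacobi_def by blast
  have L: "\<And>w l NN m p. fsum (\<lambda>i. sW (of_int (ibinom 0 i)) (YW (Y u (l + int i) m one) (0 + NN - int i) p w))
     = YW (Y u l m one) NN p w"
    by (subst fsum_single[of 0]) (auto simp: ibinom_0)
  {
    assume "p \<noteq> m"
    hence "p - m \<noteq> 0" by simp
    hence "fsum (\<lambda>i. sW (of_int ((-1)^i * (ibinom l i)))
        (YW u (0 + l - int i) m (YW one (k + int i) (p - m) w)
         - sW (of_int (isign l)) (YW one (k + l - int i) (p - m) (YW u (0 + int i) m w)))) = 0"
      by (intro fsum_zero) (simp add: vac lz)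
    thus "YW (Y u l m one) k p w = 0" using J[where w=w and l=l and MM=0 and NN=k and m=m and p=p] L by simp
  }
  have R: "fsum (\<lambda>i. sW (of_int ((-1)^i * (ibinom (-1) i)))
        (YW u (0 + -1 - int i) m (YW one (k + int i) (m - m) w)
         - sW (of_int (isign (-1))) (YW one (k + -1 - int i) (m - m) (YW u (0 + int i) m w))))
      = YW u k m w"
  proof (cases "k < 0")
    case True
    show ?thesis
      by (subst fsum_single[of "nat (-1-k)"]) (use True in \<open>auto simp: vac lz ibinom_m1 power_mult_distrib[symmetric]\<close>)
  next
    case False
    show ?thesis
      by (subst fsum_single[of "nat k"]) (use False in \<open>auto simp: vac lz ibinom_m1 power_mult_distrib[symmetric]\<close>)
  qed
  show "YW (Y u (-1) m one) k m w = YW u k m w" using J[where w=w and l="-1" and MM=0 and NN=k and m=m and p=m] L[where w=w and l="-1" and NN=k and m=m and p=m] R by simp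
qed




lemma spec_eq:
  assumes "finite F" "\<And>p. p \<notin> F \<Longrightarrow> YW u k p w = 0"
  shows "spec YW u k w = (\<Sum>p\<in>F. YW u k p w)"
proof -
  have "{p. YW u k p w \<noteq> 0} \<subseteq> F" using assms(2) by auto
  thus ?thesis unfolding spec_def by (intro sum.mono_neutral_left) (auto simp: assms(1))
qed

locale tva =
  fixes sV :: "'k::field \<Rightarrow> 'v \<Rightarrow> 'v::ab_group_add"
    and Y :: "('v, 'r::finite, 'v) tvo"
    and one :: 'v
  assumes TVA: "toroidal_vertex_algebra sV Y one"
begin

lemma vsV: "vector_space sV" using TVA by (simp add: toroidal_vertex_algebra_def)
lemma tlin: "tlinear_on sV sV UNIV Y" using TVA by (simp add: toroidal_vertex_algebra_def)
lemma linY: "Vector_Spaces.linear sV sV (Y u k m)" using TVA by (simp add: toroidal_vertex_algebra_def)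
lemma truncY: "\<exists>N. \<forall>k\<ge>N. \<forall>m. Y u k m w = 0" using TVA by (simp add: toroidal_vertex_algebra_def)
lemma vacY: "Y one k m w = (if k = -1 \<and> m = 0 then w else 0)" using TVA by (simp add: toroidal_vertex_algebra_def)
lemma creat: "k \<ge> 0 \<Longrightarrow> Y v k m one = 0" using TVA by (simp add: toroidal_vertex_algebra_def)
lemma jacV: "toroidal_jacobi sV UNIV Y Y" using TVA by (simp add: toroidal_vertex_algebra_def)

sublocale V: vector_space sV by (rule vsV)

lemma Yz: "Y u k m 0 = 0" using linY lin_zero by blast

lemma tY_add: "Y (x + y) k m w = Y x k m w + Y y k m w"
  using tlin unfolding tlinear_on_def by (metis UNIV_I V.scale_one)
lemma tY_scale: "Y (sV c x) k m w = sV c (Y x k m w)"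
  using tlin unfolding tlinear_on_def
  by (metis (no_types, lifting) UNIV_I V.scale_zero_left add.right_neutral)
lemma tY_zero: "Y 0 k m w = 0"
  using tY_scale[of 0 one k m w] by simp

lemma C: "Y (Y u l m v) (-1) p one = Y u l m (Y v (-1) (p - m) one)"
proof -
  have J: "fsum (\<lambda>i. sV (of_int (ibinom 0 i)) (Y (Y u (l + int i) m v) (0 + -1 - int i) p one))
   = fsum (\<lambda>i. sV (of_int ((-1)^i * (ibinom l i)))
        (Y u (0 + l - int i) m (Y v (-1 + int i) (p - m) one)
         - sV (of_int (isign l)) (Y v (-1 + l - int i) (p - m) (Y u (0 + int i) m one))))"
    using jacV unfolding toroidal_jacobi_def by blast
  have L: "fsum (\<lambda>i. sV (of_int (ibinom 0 i)) (Y (Y u (l + int i) m v) (0 + -1 - int i) p one))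
      = Y (Y u l m v) (-1) p one"
    by (subst fsum_single[of 0]) (auto simp: ibinom_0)
  have R: "fsum (\<lambda>i. sV (of_int ((-1)^i * (ibinom l i)))
        (Y u (0 + l - int i) m (Y v (-1 + int i) (p - m) one)
         - sV (of_int (isign l)) (Y v (-1 + l - int i) (p - m) (Y u (0 + int i) m one))))
      = Y u l m (Y v (-1) (p - m) one)"
    by (subst fsum_single[of 0]) (auto simp: creat Yz)
  show ?thesis using J L R by simp
qed

lemma gen_proj: "Y (Y a l n one) (-1) p one = (if p = n then Y a l n one else 0)"
  by (simp add: C vacY Yz)

abbreviation S0 where "S0 \<equiv> V0 sV Y one"

lemma V0_gen: "Y a l n one \<in> S0"
  unfolding V0_def by (rule V.span_base) blast

lemma one_V0: "one \<in> S0"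
  using V0_gen[of one "-1" 0] by (simp add: vacY)

lemma V0_add: "x \<in> S0 \<Longrightarrow> y \<in> S0 \<Longrightarrow> x + y \<in> S0"
  unfolding V0_def by (rule V.span_add)
lemma V0_scale: "x \<in> S0 \<Longrightarrow> sV c x \<in> S0"
  unfolding V0_def by (rule V.span_scale)
lemma V0_zero: "0 \<in> S0"
  unfolding V0_def by (rule V.span_zero)
lemma V0_sum: "(\<And>i. i \<in> A \<Longrightarrow> f i \<in> S0) \<Longrightarrow> sum f A \<in> S0"
  unfolding V0_def by (rule V.span_sum)

definition supp :: "'v \<Rightarrow> (int^'r) set" where "supp x = {p. Y x (-1) p one \<noteq> 0}"

lemma V0_decomp: "x \<in> S0 \<Longrightarrow> finite (supp x) \<and> x = (\<Sum>p\<in>supp x. Y x (-1) p one)"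
  unfolding V0_def
proof (induction rule: V.span_induct_alt)
  case base
  then show ?case by (simp add: supp_def tY_zero)
next
  case (step c g y)
  from step.hyps(1) obtain a l n where g: "g = Y a l n one" by blast
  let ?A = "insert n (supp y)"
  have fA: "finite ?A" using step.IH by simp
  have s1: "supp (sV c g + y) \<subseteq> ?A"
    by (auto simp: supp_def tY_add tY_scale g gen_proj)
  have "(\<Sum>p\<in>supp (sV c g + y). Y (sV c g + y) (-1) p one) = (\<Sum>p\<in>?A. Y (sV c g + y) (-1) p one)"
    using s1 fA by (intro sum.mono_neutral_left) (auto simp: supp_def)
  also have "\<dots> = sV c (\<Sum>p\<in>?A. Y g (-1) p one) + (\<Sum>p\<in>?A. Y y (-1) p one)"
    by (simp add: tY_add tY_scale sum.distrib V.scale_sum_right)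
  also have "(\<Sum>p\<in>?A. Y g (-1) p one) = g"
    using fA by (simp add: g gen_proj)
  also have "(\<Sum>p\<in>?A. Y y (-1) p one) = (\<Sum>p\<in>supp y. Y y (-1) p one)"
    using fA by (intro sum.mono_neutral_right) (auto simp: supp_def)
  also have "\<dots> = y" using step.IH by simp
  finally show ?case using finite_subset[OF s1 fA] by simp
qed

lemma V0_closed: "v \<in> S0 \<Longrightarrow> Y u l m v \<in> S0"
proof -
  assume v: "v \<in> S0"
  have "Y u l m v = Y u l m (\<Sum>p\<in>supp v. Y v (-1) p one)"
    using V0_decomp[OF v] by simp
  also have "\<dots> = (\<Sum>p\<in>supp v. Y u l m (Y v (-1) p one))"
    by (rule lin_sum[OF linY])
  also have "\<dots> = (\<Sum>p\<in>supp v. Y (Y u l m v) (-1) (p + m) one)"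
    by (simp add: C)
  also have "\<dots> \<in> S0" by (intro V0_sum V0_gen)
  finally show ?thesis .
qed

end




context tva begin

lemma V_proj: "Y (Y x (-1) m one) k p w = (if p = m then Y x k m w else 0)"
  using G_a[OF vsV _ _ jacV, of one x p m "-1" k w] G_b[OF vsV _ _ jacV, of one x m k w]
  by (auto simp: linY vacY)

lemma V_supp: "p \<notin> supp x \<Longrightarrow> Y x k p w = 0"
  using V_proj[of x p k p w] by (simp add: supp_def tY_zero)

lemma spec_Y: "x \<in> S0 \<Longrightarrow> spec Y x k w = (\<Sum>p\<in>supp x. Y x k p w)"
  using V0_decomp by (intro spec_eq) (auto simp: V_supp)

end

locale tmod = tva sV Y one for sV :: "'k::field \<Rightarrow> 'v \<Rightarrow> 'v::ab_group_add"
    and Y :: "('v, 'r::finite, 'v) tvo" and one :: 'v +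
  fixes sW :: "'k \<Rightarrow> 'w \<Rightarrow> 'w::ab_group_add" and YW :: "('v,'r,'w) tvo"
  assumes M: "toroidal_module_on sV Y one (V0 sV Y one) sW YW"
begin

lemma vsW: "vector_space sW" using M by (simp add: toroidal_module_on_def)
lemma tlinW: "tlinear_on sV sW S0 YW" using M by (simp add: toroidal_module_on_def)
lemma linW: "x \<in> S0 \<Longrightarrow> Vector_Spaces.linear sW sW (YW x k m)" using M by (simp add: toroidal_module_on_def)
lemma truncW: "x \<in> S0 \<Longrightarrow> \<exists>N. \<forall>k\<ge>N. \<forall>m. YW x k m w = 0" using M by (simp add: toroidal_module_on_def)
lemma vacW: "YW one k m w = (if k = -1 \<and> m = 0 then w else 0)" using M by (simp add: toroidal_module_on_def)
lemma jacW: "toroidal_jacobi sW S0 Y YW" using M by (simp add: toroidal_module_on_def)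

sublocale W: vector_space sW by (rule vsW)

lemma Wz: "x \<in> S0 \<Longrightarrow> YW x k m 0 = 0" using linW lin_zero by blast

lemma W_add: "x \<in> S0 \<Longrightarrow> y \<in> S0 \<Longrightarrow> YW (x + y) k m w = YW x k m w + YW y k m w"
proof -
  assume a: "x \<in> S0" "y \<in> S0"
  have "YW (sV 1 x + sV 1 y) k m w = sW 1 (YW x k m w) + sW 1 (YW y k m w)"
    using tlinW a unfolding tlinear_on_def by blast
  thus ?thesis by simp
qed
lemma W_scale: "x \<in> S0 \<Longrightarrow> YW (sV c x) k m w = sW c (YW x k m w)"
proof -
  assume a: "x \<in> S0"
  have "YW (sV c x + sV 0 x) k m w = sW c (YW x k m w) + sW 0 (YW x k m w)"
    using tlinW a unfolding tlinear_on_def by blast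
  thus ?thesis by simp
qed
lemma W_zero: "YW 0 k m w = 0"
  using W_scale[OF one_V0, of 0 k m w] by simp

lemma W_sum: "(\<And>i. i \<in> A \<Longrightarrow> f i \<in> S0) \<Longrightarrow> YW (sum f A) k m w = (\<Sum>i\<in>A. YW (f i) k m w)"
proof (induction A rule: infinite_finite_induct)
  case (infinite A)
  then show ?case by (simp add: W_zero)
next
  case empty
  then show ?case by (simp add: W_zero)
next
  case (insert x F)
  then show ?case by (simp add: W_add V0_sum)
qed

lemma W_proj: "x \<in> S0 \<Longrightarrow> YW (Y x (-1) m one) k p w = (if p = m then YW x k m w else 0)"
  using G_a[OF vsW _ _ jacW one_V0, of x p m "-1" k w] G_b[OF vsW _ _ jacW one_V0, of x m k w]
  by (auto simp: linW vacW)

lemma W_supp: "x \<in> S0 \<Longrightarrow> p \<notin> supp x \<Longrightarrow> YW x k p w = 0"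
  using W_proj[of x p k p w] by (simp add: supp_def W_zero)

lemma W_spec: "x \<in> S0 \<Longrightarrow> spec YW x k w = (\<Sum>p\<in>supp x. YW x k p w)"
  using V0_decomp by (intro spec_eq) (auto simp: W_supp)

lemma W_spec_proj: "x \<in> S0 \<Longrightarrow> spec YW (Y x (-1) m one) k w = YW x k m w"
  by (subst spec_eq[of "{m}"]) (auto simp: W_proj)

lemma part3: "x \<in> S0 \<Longrightarrow> unspec Y one (spec YW) x k m w = YW x k m w"
  by (simp add: unspec_def W_spec_proj)

end




lemma reidx:
  fixes g :: "int^'r::finite \<Rightarrow> 'w::comm_monoid_add"
  assumes "finite F" "finite P" "\<And>q. q \<in> F \<Longrightarrow> m + q \<in> P" "\<And>q. q \<notin> F \<Longrightarrow> g q = 0"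
  shows "(\<Sum>p\<in>P. g (p - m)) = (\<Sum>q\<in>F. g q)"
proof -
  have "(\<Sum>p\<in>P. g (p - m)) = (\<Sum>q\<in>(\<lambda>p. p - m) ` P. g q)"
    by (subst sum.reindex) (auto simp: inj_on_def)
  also have "\<dots> = (\<Sum>q\<in>F. g q)"
  proof (rule sum.mono_neutral_right)
    show "finite ((\<lambda>p. p - m) ` P)" using assms(2) by simp
    show "F \<subseteq> (\<lambda>p. p - m) ` P"
    proof
      fix q assume "q \<in> F"
      hence "m + q \<in> P" by (rule assms(3))
      thus "q \<in> (\<lambda>p. p - m) ` P" by (intro image_eqI[of _ _ "m + q"]) auto
    qed
    show "\<forall>i\<in>(\<lambda>p. p - m) ` P - F. g i = 0" using assms(4) by auto
  qed
  finally show ?thesis .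
qed

context tmod begin

lemma supp_fin: "x \<in> S0 \<Longrightarrow> finite (supp x)" using V0_decomp by blast

lemma part1_jac: "va_jacobi sW S0 (spec Y) (spec YW)"
  unfolding va_jacobi_def
proof (intro ballI allI)
  fix u v w l MM NN assume u: "u \<in> S0" and v: "v \<in> S0"
  define Fu where "Fu = supp u"
  define Fv where "Fv = supp v"
  define P where "P = (\<lambda>(a,b). a + b) ` (Fu \<times> Fv)"
  have fFu: "finite Fu" and fFv: "finite Fv" using supp_fin u v by (auto simp: Fu_def Fv_def)
  have fP: "finite P" using fFu fFv by (simp add: P_def)
  have inP: "\<And>m q. m \<in> Fu \<Longrightarrow> q \<in> Fv \<Longrightarrow> m + q \<in> P" by (force simp: P_def)
  have f2: "YW (Y u k m v) k' p w' = 0" if "m \<in> Fu" "p \<notin> P" for k m k' p w'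
  proof -
    have "p - m \<notin> Fv" using inP[OF that(1), of "p - m"] that(2) by auto
    hence "p \<notin> supp (Y u k m v)" by (simp add: supp_def C Fv_def Yz)
    thus ?thesis by (intro W_supp V0_closed v)
  qed
  have f3: "spec YW (spec Y u k v) k' w = (\<Sum>m\<in>Fu. \<Sum>p\<in>P. YW (Y u k m v) k' p w)" for k k'
  proof -
    have X: "spec Y u k v = (\<Sum>m\<in>Fu. Y u k m v)" using spec_Y[OF u] by (simp add: Fu_def)
    have Wp: "YW (\<Sum>m\<in>Fu. Y u k m v) k' p w = (\<Sum>m\<in>Fu. YW (Y u k m v) k' p w)" for p
      by (intro W_sum V0_closed v)
    have "spec YW (\<Sum>m\<in>Fu. Y u k m v) k' w = (\<Sum>p\<in>P. YW (\<Sum>m\<in>Fu. Y u k m v) k' p w)"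
      using fP by (intro spec_eq) (auto simp: Wp f2)
    also have "\<dots> = (\<Sum>m\<in>Fu. \<Sum>p\<in>P. YW (Y u k m v) k' p w)"
      by (simp add: Wp sum.swap[of _ P])
    finally show ?thesis using X by simp
  qed
  have f4: "spec YW u a (spec YW v b w) = (\<Sum>m\<in>Fu. \<Sum>p\<in>P. YW u a m (YW v b (p - m) w))" for a b
  proof -
    have "spec YW u a (spec YW v b w) = (\<Sum>m\<in>Fu. YW u a m (\<Sum>q\<in>Fv. YW v b q w))"
      using W_spec[OF u] W_spec[OF v] by (simp add: Fu_def Fv_def)
    also have "\<dots> = (\<Sum>m\<in>Fu. \<Sum>q\<in>Fv. YW u a m (YW v b q w))"
      by (simp add: lin_sum[OF linW[OF u]])
    also have "\<dots> = (\<Sum>m\<in>Fu. \<Sum>p\<in>P. YW u a m (YW v b (p - m) w))"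
    proof (rule sum.cong[OF refl])
      fix m assume m: "m \<in> Fu"
      show "(\<Sum>q\<in>Fv. YW u a m (YW v b q w)) = (\<Sum>p\<in>P. YW u a m (YW v b (p - m) w))"
        by (rule reidx[symmetric, OF fFv fP inP[OF m]]) (use W_supp[OF v] Wz[OF u] in \<open>auto simp: Fv_def\<close>)
    qed
    finally show ?thesis .
  qed
  have f5: "spec YW v b (spec YW u a w) = (\<Sum>m\<in>Fu. \<Sum>p\<in>P. YW v b (p - m) (YW u a m w))" for a b
  proof -
    have "spec YW v b (spec YW u a w) = (\<Sum>q\<in>Fv. YW v b q (\<Sum>m\<in>Fu. YW u a m w))"
      using W_spec[OF u] W_spec[OF v] by (simp add: Fu_def Fv_def)
    also have "\<dots> = (\<Sum>q\<in>Fv. \<Sum>m\<in>Fu. YW v b q (YW u a m w))"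
      by (simp add: lin_sum[OF linW[OF v]])
    also have "\<dots> = (\<Sum>m\<in>Fu. \<Sum>q\<in>Fv. YW v b q (YW u a m w))"
      by (rule sum.swap)
    also have "\<dots> = (\<Sum>m\<in>Fu. \<Sum>p\<in>P. YW v b (p - m) (YW u a m w))"
    proof (rule sum.cong[OF refl])
      fix m assume m: "m \<in> Fu"
      show "(\<Sum>q\<in>Fv. YW v b q (YW u a m w)) = (\<Sum>p\<in>P. YW v b (p - m) (YW u a m w))"
        by (rule reidx[symmetric, OF fFv fP inP[OF m]]) (use W_supp[OF v] in \<open>auto simp: Fv_def\<close>)
    qed
    finally show ?thesis .
  qed
  define Lt where "Lt m p i = sW (of_int (ibinom MM i)) (YW (Y u (l + int i) m v) (MM + NN - int i) p w)" for m p i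
  define Rt where "Rt m p i = sW (of_int ((-1)^i * (ibinom l i)))
        (YW u (MM + l - int i) m (YW v (NN + int i) (p - m) w)
         - sW (of_int (isign l)) (YW v (NN + l - int i) (p - m) (YW u (MM + int i) m w)))" for m p i
  have TJ: "fsum (Lt m p) = fsum (Rt m p)" for m p
    using jacW u v unfolding toroidal_jacobi_def Lt_def Rt_def by blast
  obtain N1 where N1: "\<And>k m. k \<ge> N1 \<Longrightarrow> Y u k m v = 0" using truncY by blast
  obtain N2 where N2: "\<And>k q. k \<ge> N2 \<Longrightarrow> YW v k q w = 0" using truncW[OF v] by blast
  obtain N3 where N3: "\<And>k q. k \<ge> N3 \<Longrightarrow> YW u k q w = 0" using truncW[OF u] by blast
  define K where "K = nat (max (N1 - l) (max (N2 - NN) (N3 - MM)))"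
  have Lz: "Lt m p i = 0" if "i \<ge> K" for m p i
  proof -
    have "l + int i \<ge> N1" using that by (simp add: K_def)
    thus ?thesis by (simp add: Lt_def N1 W_zero)
  qed
  have Rz: "Rt m p i = 0" if "i \<ge> K" for m p i
  proof -
    have "NN + int i \<ge> N2" "MM + int i \<ge> N3" using that by (auto simp: K_def)
    thus ?thesis by (simp add: Rt_def N2 N3 Wz u v)
  qed
  have LHS: "fsum (\<lambda>i. sW (of_int (ibinom MM i)) (spec YW (spec Y u (l + int i) v) (MM + NN - int i) w))
      = (\<Sum>m\<in>Fu. \<Sum>p\<in>P. fsum (Lt m p))"
  proof -
    have "fsum (\<lambda>i. sW (of_int (ibinom MM i)) (spec YW (spec Y u (l + int i) v) (MM + NN - int i) w))
        = fsum (\<lambda>i. \<Sum>m\<in>Fu. \<Sum>p\<in>P. Lt m p i)"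
      by (simp add: f3 Lt_def W.scale_sum_right)
    also have "\<dots> = (\<Sum>i<K. \<Sum>m\<in>Fu. \<Sum>p\<in>P. Lt m p i)"
      by (rule fsum_lessThan) (simp add: Lz)
    also have "\<dots> = (\<Sum>m\<in>Fu. \<Sum>p\<in>P. \<Sum>i<K. Lt m p i)"
      by (simp add: sum.swap[of _ "{..<K}"])
    also have "\<dots> = (\<Sum>m\<in>Fu. \<Sum>p\<in>P. fsum (Lt m p))"
      by (simp add: fsum_lessThan[of K] Lz)
    finally show ?thesis .
  qed
  have RHS: "fsum (\<lambda>i. sW (of_int ((-1)^i * (ibinom l i)))
        (spec YW u (MM + l - int i) (spec YW v (NN + int i) w)
         - sW (of_int (isign l)) (spec YW v (NN + l - int i) (spec YW u (MM + int i) w))))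
      = (\<Sum>m\<in>Fu. \<Sum>p\<in>P. fsum (Rt m p))"
  proof -
    have "fsum (\<lambda>i. sW (of_int ((-1)^i * (ibinom l i)))
        (spec YW u (MM + l - int i) (spec YW v (NN + int i) w)
         - sW (of_int (isign l)) (spec YW v (NN + l - int i) (spec YW u (MM + int i) w))))
        = fsum (\<lambda>i. \<Sum>m\<in>Fu. \<Sum>p\<in>P. Rt m p i)"
      by (simp add: f4 f5 Rt_def W.scale_sum_right sum_subtractf[symmetric] W.scale_right_diff_distrib)
    also have "\<dots> = (\<Sum>i<K. \<Sum>m\<in>Fu. \<Sum>p\<in>P. Rt m p i)"
      by (rule fsum_lessThan) (simp add: Rz)
    also have "\<dots> = (\<Sum>m\<in>Fu. \<Sum>p\<in>P. \<Sum>i<K. Rt m p i)"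
      by (simp add: sum.swap[of _ "{..<K}"])
    also have "\<dots> = (\<Sum>m\<in>Fu. \<Sum>p\<in>P. fsum (Rt m p))"
      by (simp add: fsum_lessThan[of K] Rz)
    finally show ?thesis .
  qed
  show "fsum (\<lambda>i. sW (of_int (ibinom MM i)) (spec YW (spec Y u (l + int i) v) (MM + NN - int i) w))
      = fsum (\<lambda>i. sW (of_int ((-1)^i * (ibinom l i)))
        (spec YW u (MM + l - int i) (spec YW v (NN + int i) w)
         - sW (of_int (isign l)) (spec YW v (NN + l - int i) (spec YW u (MM + int i) w))))"
    using LHS RHS TJ by simp
qed

end




context tmod begin

lemma part1: "va_module_on sV (spec Y) one S0 sW (spec YW)"
  unfolding va_module_on_def
proof (intro conjI)
  show "vector_space sW" by (rule vsW)
  show "vlinear_on sV sW S0 (spec YW)"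
    unfolding vlinear_on_def
  proof (intro allI impI)
    fix a b u v k w assume u: "u \<in> S0" and v: "v \<in> S0"
    let ?F = "supp u \<union> supp v"
    have fF: "finite ?F" using supp_fin u v by auto
    have x: "sV a u + sV b v \<in> S0" using u v by (intro V0_add V0_scale)
    have e: "YW (sV a u + sV b v) k p w = sW a (YW u k p w) + sW b (YW v k p w)" for p
      using u v by (simp add: W_add W_scale V0_scale)
    have "spec YW (sV a u + sV b v) k w = (\<Sum>p\<in>?F. YW (sV a u + sV b v) k p w)"
      using fF by (intro spec_eq) (auto simp: e W_supp u v)
    also have "\<dots> = sW a (\<Sum>p\<in>?F. YW u k p w) + sW b (\<Sum>p\<in>?F. YW v k p w)"
      by (simp add: e sum.distrib W.scale_sum_right)
    also have "(\<Sum>p\<in>?F. YW u k p w) = spec YW u k w"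
      using fF by (intro spec_eq[symmetric]) (auto simp: W_supp u)
    also have "(\<Sum>p\<in>?F. YW v k p w) = spec YW v k w"
      using fF by (intro spec_eq[symmetric]) (auto simp: W_supp v)
    finally show "spec YW (sV a u + sV b v) k w = sW a (spec YW u k w) + sW b (spec YW v k w)" .
  qed
  show "\<forall>u\<in>S0. \<forall>m0. Vector_Spaces.linear sW sW (spec YW u m0)"
  proof (intro ballI allI)
    fix u k assume u: "u \<in> S0"
    interpret WP: vector_space_pair sW sW by unfold_locales
    have e: "spec YW u k = (\<lambda>w. \<Sum>p\<in>supp u. YW u k p w)" using W_spec[OF u] by auto
    have "Vector_Spaces.linear sW sW (\<lambda>w. \<Sum>p\<in>supp u. YW u k p w)"
      by (rule WP.linear_compose_sum) (simp add: linW u)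
    thus "Vector_Spaces.linear sW sW (spec YW u k)" by (simp only: e)
  qed
  show "\<forall>u\<in>S0. \<forall>w. \<exists>N. \<forall>k\<ge>N. spec YW u k w = 0"
  proof (intro ballI allI)
    fix u w assume u: "u \<in> S0"
    obtain N where N: "\<And>k q. k \<ge> N \<Longrightarrow> YW u k q w = 0" using truncW[OF u] by blast
    show "\<exists>N. \<forall>k\<ge>N. spec YW u k w = 0"
      by (rule exI[of _ N]) (simp add: spec_def N)
  qed
  show "\<forall>k w. spec YW one k w = (if k = -1 then w else 0)"
  proof (intro allI)
    fix k w
    have "spec YW one k w = (\<Sum>p\<in>{0}. YW one k p w)"
      by (intro spec_eq) (auto simp: vacW)
    thus "spec YW one k w = (if k = -1 then w else 0)" by (simp add: vacW)
  qed
  show "va_jacobi sW S0 (spec Y) (spec YW)" by (rule part1_jac)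
qed

end

context tva begin

lemma homs:
  fixes sW1 :: "'k \<Rightarrow> 'w1 \<Rightarrow> 'w1::ab_group_add" and YW1 :: "('v,'r,'w1) tvo"
    and sW2 :: "'k \<Rightarrow> 'w2 \<Rightarrow> 'w2::ab_group_add" and YW2 :: "('v,'r,'w2) tvo"
  assumes M1: "toroidal_module_on sV Y one S0 sW1 YW1"
    and M2: "toroidal_module_on sV Y one S0 sW2 YW2"
  shows "toroidal_hom sW1 sW2 S0 YW1 YW2 f \<longleftrightarrow> va_hom sW1 sW2 S0 (spec YW1) (spec YW2) f"
proof -
  interpret M1: tmod sV Y one sW1 YW1 by unfold_locales (rule M1)
  interpret M2: tmod sV Y one sW2 YW2 by unfold_locales (rule M2)
  show ?thesis
    unfolding toroidal_hom_def va_hom_def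
  proof (intro iffI conjI; (elim conjE)?)
    assume lf: "Vector_Spaces.linear sW1 sW2 f" and h: "\<forall>u\<in>S0. \<forall>m0 m w. f (YW1 u m0 m w) = YW2 u m0 m (f w)"
    show "Vector_Spaces.linear sW1 sW2 f" by (rule lf)
    show "\<forall>u\<in>S0. \<forall>m0 w. f (spec YW1 u m0 w) = spec YW2 u m0 (f w)"
      using h by (simp add: M1.W_spec M2.W_spec lin_sum[OF lf])
  next
    assume lf: "Vector_Spaces.linear sW1 sW2 f" and h: "\<forall>u\<in>S0. \<forall>m0 w. f (spec YW1 u m0 w) = spec YW2 u m0 (f w)"
    show "Vector_Spaces.linear sW1 sW2 f" by (rule lf)
    show "\<forall>u\<in>S0. \<forall>m0 m w. f (YW1 u m0 m w) = YW2 u m0 m (f w)"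
    proof (intro ballI allI)
      fix u k m w assume u: "u \<in> S0"
      have "f (YW1 u k m w) = f (spec YW1 (Y u (-1) m one) k w)" by (simp add: M1.W_spec_proj u)
      also have "\<dots> = spec YW2 (Y u (-1) m one) k (f w)" using h V0_gen by blast
      also have "\<dots> = YW2 u k m (f w)" by (simp add: M2.W_spec_proj u)
      finally show "f (YW1 u k m w) = YW2 u k m (f w)" .
    qed
  qed
qed

end




locale vmod = tva sV Y one for sV :: "'k::field \<Rightarrow> 'v \<Rightarrow> 'v::ab_group_add"
    and Y :: "('v, 'r::finite, 'v) tvo" and one :: 'v +
  fixes sW :: "'k \<Rightarrow> 'w \<Rightarrow> 'w::ab_group_add" and YW0 :: "('v,'w) vo"
  assumes M: "va_module_on sV (spec Y) one (V0 sV Y one) sW YW0"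
begin

lemma vsW: "vector_space sW" using M by (simp add: va_module_on_def)
lemma vlin: "vlinear_on sV sW S0 YW0" using M by (simp add: va_module_on_def)
lemma lin0: "x \<in> S0 \<Longrightarrow> Vector_Spaces.linear sW sW (YW0 x k)" using M by (simp add: va_module_on_def)
lemma trunc0: "x \<in> S0 \<Longrightarrow> \<exists>N. \<forall>k\<ge>N. YW0 x k w = 0" using M by (simp add: va_module_on_def)
lemma vac0: "YW0 one k w = (if k = -1 then w else 0)" using M by (simp add: va_module_on_def)
lemma jac0: "va_jacobi sW S0 (spec Y) YW0" using M by (simp add: va_module_on_def)

sublocale W: vector_space sW by (rule vsW)

lemma Z_lin: "x \<in> S0 \<Longrightarrow> y \<in> S0 \<Longrightarrow> YW0 (sV a x + sV b y) k w = sW a (YW0 x k w) + sW b (YW0 y k w)"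
  using vlin unfolding vlinear_on_def by blast
lemma Z_add: "x \<in> S0 \<Longrightarrow> y \<in> S0 \<Longrightarrow> YW0 (x + y) k w = YW0 x k w + YW0 y k w"
  using Z_lin[of x y 1 1] by simp
lemma Z_zero: "YW0 0 k w = 0"
  using Z_lin[OF one_V0 one_V0, of 0 0] by simp
lemma Z_sum: "(\<And>i. i \<in> A \<Longrightarrow> f i \<in> S0) \<Longrightarrow> YW0 (sum f A) k w = (\<Sum>i\<in>A. YW0 (f i) k w)"
proof (induction A rule: infinite_finite_induct)
  case (infinite A)
  then show ?case by (simp add: Z_zero)
next
  case empty
  then show ?case by (simp add: Z_zero)
next
  case (insert x F)
  then show ?case by (simp add: Z_add V0_sum)
qed

lemma part4: "x \<in> S0 \<Longrightarrow> spec (unspec Y one YW0) x k w = YW0 x k w"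
proof -
  assume x: "x \<in> S0"
  have "spec (unspec Y one YW0) x k w = (\<Sum>m\<in>supp x. YW0 (Y x (-1) m one) k w)"
    using V0_decomp[OF x] by (subst spec_eq[of "supp x"]) (auto simp: unspec_def supp_def Z_zero)
  also have "\<dots> = YW0 (\<Sum>m\<in>supp x. Y x (-1) m one) k w"
    by (rule Z_sum[symmetric]) (rule V0_gen)
  also have "\<dots> = YW0 x k w" using V0_decomp[OF x] by simp
  finally show ?thesis .
qed

lemma spec_proj: "spec Y (Y u (-1) m one) k v = Y u k m v"
  by (subst spec_eq[of "{m}"]) (auto simp: V_proj)

lemma part2: "toroidal_module_on sV Y one S0 sW (unspec Y one YW0)"
  unfolding toroidal_module_on_def
proof (intro conjI)
  show "vector_space sW" by (rule vsW)
  show "tlinear_on sV sW S0 (unspec Y one YW0)"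
    unfolding tlinear_on_def unspec_def
    by (simp add: tY_add tY_scale Z_lin V0_gen)
  show "\<forall>u\<in>S0. \<forall>m0 m. Vector_Spaces.linear sW sW (unspec Y one YW0 u m0 m)"
    unfolding unspec_def by (simp add: lin0 V0_gen)
  show "\<forall>u\<in>S0. \<forall>w. \<exists>N. \<forall>k\<ge>N. \<forall>m. unspec Y one YW0 u k m w = 0"
  proof (intro ballI allI)
    fix u w assume u: "u \<in> S0"
    have "\<forall>m. \<exists>N. \<forall>k\<ge>N. YW0 (Y u (-1) m one) k w = 0" using trunc0 V0_gen by blast
    then obtain Nf where Nf: "\<And>m k. k \<ge> Nf m \<Longrightarrow> YW0 (Y u (-1) m one) k w = 0" by metis
    define N where "N = Max (insert 0 (Nf ` supp u))"
    have fin: "finite (supp u)" using V0_decomp[OF u] by blast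
    have "unspec Y one YW0 u k m w = 0" if "k \<ge> N" for k m
    proof (cases "m \<in> supp u")
      case True
      hence "Nf m \<le> N" unfolding N_def using fin by (intro Max_ge) auto
      thus ?thesis using that Nf by (simp add: unspec_def)
    next
      case False
      thus ?thesis by (simp add: unspec_def supp_def Z_zero)
    qed
    thus "\<exists>N. \<forall>k\<ge>N. \<forall>m. unspec Y one YW0 u k m w = 0" by blast
  qed
  show "\<forall>k m w. unspec Y one YW0 one k m w = (if k = -1 \<and> m = 0 then w else 0)"
    by (simp add: unspec_def vacY vac0 Z_zero)
  show "toroidal_jacobi sW S0 Y (unspec Y one YW0)"
    unfolding toroidal_jacobi_def
  proof (intro ballI allI)
    fix u v w l MM NN m p assume u: "u \<in> S0" and v: "v \<in> S0"
    have J: "fsum (\<lambda>i. sW (of_int (ibinom MM i)) (YW0 (spec Y (Y u (-1) m one) (l + int i) (Y v (-1) (p - m) one)) (MM + NN - int i) w))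
   = fsum (\<lambda>i. sW (of_int ((-1)^i * (ibinom l i)))
        (YW0 (Y u (-1) m one) (MM + l - int i) (YW0 (Y v (-1) (p - m) one) (NN + int i) w)
         - sW (of_int (isign l)) (YW0 (Y v (-1) (p - m) one) (NN + l - int i) (YW0 (Y u (-1) m one) (MM + int i) w))))"
      using jac0 V0_gen unfolding va_jacobi_def by blast
    show "fsum (\<lambda>i. sW (of_int (ibinom MM i)) (unspec Y one YW0 (Y u (l + int i) m v) (MM + NN - int i) p w))
   = fsum (\<lambda>i. sW (of_int ((-1)^i * (ibinom l i)))
        (unspec Y one YW0 u (MM + l - int i) m (unspec Y one YW0 v (NN + int i) (p - m) w)
         - sW (of_int (isign l)) (unspec Y one YW0 v (NN + l - int i) (p - m) (unspec Y one YW0 u (MM + int i) m w))))"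
      using J by (simp add: unspec_def C spec_proj)
  qed
qed

end



theorem theorem2p12:
  fixes sV :: "'k::field \<Rightarrow> 'v \<Rightarrow> 'v::ab_group_add"
    and Y :: "('v, 'r::finite, 'v) tvo"
    and one :: 'v
  assumes TVA: "toroidal_vertex_algebra sV Y one"
  shows
   "(\<forall>(sW :: 'k \<Rightarrow> 'w \<Rightarrow> 'w::ab_group_add) (YW :: ('v,'r,'w) tvo).
        toroidal_module_on sV Y one (V0 sV Y one) sW YW
        \<longrightarrow> va_module_on sV (spec Y) one (V0 sV Y one) sW (spec YW))
  \<and> (\<forall>(sW :: 'k \<Rightarrow> 'w \<Rightarrow> 'w) (YW0 :: ('v,'w) vo).
        va_module_on sV (spec Y) one (V0 sV Y one) sW YW0
        \<longrightarrow> toroidal_module_on sV Y one (V0 sV Y one) sW (unspec Y one YW0))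
  \<and> (\<forall>(sW :: 'k \<Rightarrow> 'w \<Rightarrow> 'w) (YW :: ('v,'r,'w) tvo).
        toroidal_module_on sV Y one (V0 sV Y one) sW YW
        \<longrightarrow> (\<forall>u\<in>V0 sV Y one. \<forall>m0 m w. unspec Y one (spec YW) u m0 m w = YW u m0 m w))
  \<and> (\<forall>(sW :: 'k \<Rightarrow> 'w \<Rightarrow> 'w) (YW0 :: ('v,'w) vo).
        va_module_on sV (spec Y) one (V0 sV Y one) sW YW0
        \<longrightarrow> (\<forall>u\<in>V0 sV Y one. \<forall>m0 w. spec (unspec Y one YW0) u m0 w = YW0 u m0 w))
  \<and> (\<forall>(sW1 :: 'k \<Rightarrow> 'w \<Rightarrow> 'w) (YW1 :: ('v,'r,'w) tvo)
        (sW2 :: 'k \<Rightarrow> 'w2 \<Rightarrow> 'w2::ab_group_add) (YW2 :: ('v,'r,'w2) tvo) f.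
        toroidal_module_on sV Y one (V0 sV Y one) sW1 YW1
        \<longrightarrow> toroidal_module_on sV Y one (V0 sV Y one) sW2 YW2
        \<longrightarrow> (toroidal_hom sW1 sW2 (V0 sV Y one) YW1 YW2 f
             \<longleftrightarrow> va_hom sW1 sW2 (V0 sV Y one) (spec YW1) (spec YW2) f))"
  proof -
  interpret tva sV Y one by unfold_locales (rule TVA)
  show ?thesis
  proof (intro conjI allI impI ballI)
    fix sW :: "'k \<Rightarrow> 'w \<Rightarrow> 'w::ab_group_add" and YW :: "('v,'r,'w) tvo"
    assume M: "toroidal_module_on sV Y one (V0 sV Y one) sW YW"
    interpret tmod sV Y one sW YW by unfold_locales (rule M)
    show "va_module_on sV (spec Y) one (V0 sV Y one) sW (spec YW)" by (rule part1)
  next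
    fix sW :: "'k \<Rightarrow> 'w \<Rightarrow> 'w::ab_group_add" and YW0 :: "('v,'w) vo"
    assume M: "va_module_on sV (spec Y) one (V0 sV Y one) sW YW0"
    interpret vmod sV Y one sW YW0 by unfold_locales (rule M)
    show "toroidal_module_on sV Y one (V0 sV Y one) sW (unspec Y one YW0)" by (rule part2)
  next
    fix sW :: "'k \<Rightarrow> 'w \<Rightarrow> 'w::ab_group_add" and YW :: "('v,'r,'w) tvo" and u m0 m w
    assume M: "toroidal_module_on sV Y one (V0 sV Y one) sW YW" and u: "u \<in> V0 sV Y one"
    interpret tmod sV Y one sW YW by unfold_locales (rule M)
    show "unspec Y one (spec YW) u m0 m w = YW u m0 m w" by (rule part3[OF u])
  next
    fix sW :: "'k \<Rightarrow> 'w \<Rightarrow> 'w::ab_group_add" and YW0 :: "('v,'w) vo" and u m0 w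
    assume M: "va_module_on sV (spec Y) one (V0 sV Y one) sW YW0" and u: "u \<in> V0 sV Y one"
    interpret vmod sV Y one sW YW0 by unfold_locales (rule M)
    show "spec (unspec Y one YW0) u m0 w = YW0 u m0 w" by (rule part4[OF u])
  next
    fix sW1 :: "'k \<Rightarrow> 'w \<Rightarrow> 'w::ab_group_add" and YW1 :: "('v,'r,'w) tvo"
      and sW2 :: "'k \<Rightarrow> 'w2 \<Rightarrow> 'w2::ab_group_add" and YW2 :: "('v,'r,'w2) tvo" and f
    assume M1: "toroidal_module_on sV Y one (V0 sV Y one) sW1 YW1"
      and M2: "toroidal_module_on sV Y one (V0 sV Y one) sW2 YW2"
    show "toroidal_hom sW1 sW2 (V0 sV Y one) YW1 YW2 f \<longleftrightarrow> va_hom sW1 sW2 (V0 sV Y one) (spec YW1) (spec YW2) f"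
      by (rule homs[OF M1 M2])
  qed
qed

end
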